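(* Let $P_Z$ be a distribution on $\mathcal{Z}$. Let $\tilde S=(\tilde Z_1,\ldots,\tilde Z_{2n})$ consist of $2n$ i.i.d. samples from $P_Z$, let $U=(U_1,\ldots,U_n)$ be i.i.d. Bernoulli$(1/2)$ independent of $\tilde S$, let $Z_i=\tilde Z_{i+U_in}$, $S=(Z_1,\ldots,Z_n)$, and let $W$, taking values in a Polish metric space $(\mathcal{W},\rho)$, be produced from $S$ by $P_{W|S}$. Let $J$ be a uniformly random subset of $[n]$ of size $m$, independent of $(W,\tilde S,U)$. Then $$\mathbb{E}\big[\mathbb{W}(P_{W|\tilde S,U},P_{W|\tilde S,U_{J^c}})\big]\le 2\,\mathbb{E}\big[\mathbb{W}(P_{W|\tilde S,U},P_{W|\tilde S})\big].$$
   Context: For $j\subseteq[n]$, $U_j=(U_i)_{i\in j}$ and $j^c=[n]\setminus j$. $P_{W|\cdots}$ denote conditional distributions of $W$. $\mathbb{W}$ is the order-1 Wasserstein distance with respect to $\rho$: $\mathbb{W}(P,Q)=\inf_{R\in\Pi(P,Q)}\int\rho\,dR$ over couplings. *)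

theory Defs
  imports "HOL-Probability.Probability"
begin

definition couplings :: "'w::polish_space measure \<Rightarrow> 'w measure \<Rightarrow> ('w \<times> 'w) measure set" where
  "couplings P Q = {R. prob_space R \<and> sets R = sets (P \<Otimes>\<^sub>M Q)
                        \<and> distr R P fst = P \<and> distr R Q snd = Q}"

definition wasserstein1 :: "'w::polish_space measure \<Rightarrow> 'w measure \<Rightarrow> ennreal" where
  "wasserstein1 P Q = (INF R \<in> couplings P Q. \<integral>\<^sup>+ x. ennreal (dist (fst x) (snd x)) \<partial>R)"

text \<open>Supersample selection: Z_i = Ztilde_(i + U_i n), indices 0-based.\<close>
definition select_sample :: "nat \<Rightarrow> (nat \<Rightarrow> 'z) \<Rightarrow> (nat \<Rightarrow> bool) \<Rightarrow> (nat \<Rightarrow> 'z)" where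
  "select_sample n s u = (\<lambda>i\<in>{..<n}. s (if u i then i + n else i))"

text \<open>Conditional law of W given (Ztilde, U_{J^c}) where U_{J^c} agrees with u:
average of the kernel over all completions of u on J (U uniform on {0,1}^n).\<close>
definition cond_law :: "nat \<Rightarrow> ((nat \<Rightarrow> 'z) \<Rightarrow> 'w measure) \<Rightarrow> (nat \<Rightarrow> 'z) \<Rightarrow> (nat \<Rightarrow> bool) \<Rightarrow> nat set \<Rightarrow> 'w measure" where
  "cond_law n K s u J =
     measure_pmf (pmf_of_set {v \<in> {..<n} \<rightarrow>\<^sub>E (UNIV::bool set). \<forall>i \<in> {..<n} - J. v i = u i})
       \<bind> (\<lambda>v. K (select_sample n s v))"

end

theory Submission
  imports Defs
begin


definition cost :: "('w::metric_space \<times> 'w) measure \<Rightarrow> ennreal" where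
  "cost R = (\<integral>\<^sup>+ x. ennreal (dist (fst x) (snd x)) \<partial>R)"

lemma suminf_single_nat: "(\<Sum>k. if k = (i::nat) then (f k :: ennreal) else 0) = f i"
  using sums_single[of i f] sums_unique by metis

lemma sum_fibers:
  fixes M :: "'a measure" and \<phi> :: "'a \<Rightarrow> nat"
  assumes \<phi>[measurable]: "\<phi> \<in> M \<rightarrow>\<^sub>M count_space UNIV"
  shows "(\<integral>\<^sup>+ x. F (\<phi> x) \<partial>M) = (\<Sum>k. F k * emeasure M {x\<in>space M. \<phi> x = k})"
proof -
  have "(\<integral>\<^sup>+ x. F (\<phi> x) \<partial>M) = (\<integral>\<^sup>+ x. (\<Sum>k. F k * indicator {x\<in>space M. \<phi> x = k} x) \<partial>M)"
  proof (rule nn_integral_cong)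
    fix x assume x: "x \<in> space M"
    have "(\<Sum>k. F k * indicator {x\<in>space M. \<phi> x = k} x) = (\<Sum>k. if k = \<phi> x then F k else 0)"
      using x by (intro suminf_cong) (auto simp: indicator_def)
    also have "\<dots> = F (\<phi> x)" by (rule suminf_single_nat)
    finally show "F (\<phi> x) = (\<Sum>k. F k * indicator {x\<in>space M. \<phi> x = k} x)" by simp
  qed
  also have "\<dots> = (\<Sum>k. \<integral>\<^sup>+ x. F k * indicator {x\<in>space M. \<phi> x = k} x \<partial>M)"
    by (rule nn_integral_suminf) measurable
  also have "\<dots> = (\<Sum>k. F k * emeasure M {x\<in>space M. \<phi> x = k})"
    by (intro suminf_cong nn_integral_cmult_indicator) measurable
  finally show ?thesis .
qed

lemma sum_fiber_parts:
  fixes M :: "'a measure" and \<phi> :: "'a \<Rightarrow> nat"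
  assumes \<phi>[measurable]: "\<phi> \<in> M \<rightarrow>\<^sub>M count_space UNIV" and g[measurable]: "g \<in> borel_measurable M"
  shows "(\<Sum>k. \<integral>\<^sup>+ x. g x * indicator {x\<in>space M. \<phi> x = k} x \<partial>M) = (\<integral>\<^sup>+ x. g x \<partial>M)"
proof -
  have "(\<Sum>k. \<integral>\<^sup>+ x. g x * indicator {x\<in>space M. \<phi> x = k} x \<partial>M)
      = (\<integral>\<^sup>+ x. (\<Sum>k. g x * indicator {x\<in>space M. \<phi> x = k} x) \<partial>M)"
    by (rule nn_integral_suminf[symmetric]) measurable
  also have "\<dots> = (\<integral>\<^sup>+ x. g x \<partial>M)"
  proof (rule nn_integral_cong)
    fix x assume x: "x \<in> space M"
    have "(\<Sum>k. g x * indicator {x\<in>space M. \<phi> x = k} x) = (\<Sum>k. if k = \<phi> x then g x else 0)"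
      using x by (intro suminf_cong) (auto simp: indicator_def)
    also have "\<dots> = g x" using suminf_single_nat[of "\<phi> x" "\<lambda>_. g x"] by simp
    finally show "(\<Sum>k. g x * indicator {x\<in>space M. \<phi> x = k} x) = g x" .
  qed
  finally show ?thesis .
qed

lemma cover_index:
  obtains e :: "nat \<Rightarrow> 'w::polish_space" where "\<And>y r. r > 0 \<Longrightarrow> \<exists>k. dist (e k) y < r"
proof -
  obtain D :: "'w set" where D: "countable D" "\<And>X. open X \<Longrightarrow> X \<noteq> {} \<Longrightarrow> \<exists>d\<in>D. d \<in> X"
    by (rule countable_dense_setE) blast
  have "D \<noteq> {}" using D(2)[of UNIV] by auto
  define e where "e = from_nat_into D"
  have "\<exists>k. dist (e k) y < r" if "r > 0" for y r
  proof -
    obtain d where "d \<in> D" "d \<in> ball y r" using D(2)[of "ball y r"] \<open>r > 0\<close> by auto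
    then obtain k where "e k = d" unfolding e_def using from_nat_into_surj[OF D(1)] by metis
    then show ?thesis using \<open>d \<in> ball y r\<close> by (auto simp: dist_commute)
  qed
  then show ?thesis using that by blast
qed


lemma fst_borel[measurable]: "fst \<in> (borel :: ('a::second_countable_topology \<times> 'b::second_countable_topology) measure) \<rightarrow>\<^sub>M borel"
  using measurable_fst[of "borel::'a measure" "borel::'b measure"] by (simp add: borel_prod)
lemma snd_borel[measurable]: "snd \<in> (borel :: ('a::second_countable_topology \<times> 'b::second_countable_topology) measure) \<rightarrow>\<^sub>M borel"
  using measurable_snd[of "borel::'a measure" "borel::'b measure"] by (simp add: borel_prod)

lemma distr_pair_snd':
  assumes "prob_space M" "prob_space N"
  shows "distr (M \<Otimes>\<^sub>M N) N snd = N"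
proof (rule measure_eqI)
  interpret N: prob_space N by fact
  interpret M: prob_space M by fact
  show "sets (distr (M \<Otimes>\<^sub>M N) N snd) = sets N" by simp
  fix C assume C: "C \<in> sets (distr (M \<Otimes>\<^sub>M N) N snd)"
  then have C': "C \<in> sets N" by simp
  have "snd -` C \<inter> space (M \<Otimes>\<^sub>M N) = space M \<times> C"
    using sets.sets_into_space[OF C'] by (auto simp: space_pair_measure)
  then show "emeasure (distr (M \<Otimes>\<^sub>M N) N snd) C = emeasure N C"
    using C' by (simp add: emeasure_distr N.emeasure_pair_measure_Times M.emeasure_space_1)
qed

lemma glue:
  fixes R1 R2 :: "('w::polish_space \<times> 'w) measure" and \<epsilon> :: real
  assumes p1: "prob_space R1" and s1: "sets R1 = sets borel"
    and p2: "prob_space R2" and s2: "sets R2 = sets borel"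
    and mid: "distr R1 borel snd = distr R2 borel fst"
    and eps: "\<epsilon> > 0"
  obtains R where "prob_space R" "sets R = sets borel"
    "distr R borel fst = distr R1 borel fst" "distr R borel snd = distr R2 borel snd"
    "cost R \<le> cost R1 + cost R2 + ennreal \<epsilon>"
proof -
  interpret R1: prob_space R1 by fact
  interpret R2: prob_space R2 by fact
  have sp1: "space R1 = UNIV" using sets_eq_imp_space_eq[OF s1] by simp
  have sp2: "space R2 = UNIV" using sets_eq_imp_space_eq[OF s2] by simp
  have m1: "f \<in> R1 \<rightarrow>\<^sub>M N" if "f \<in> borel \<rightarrow>\<^sub>M N" for N f using measurable_cong_sets[OF s1 refl, of N] that by simp
  have m2: "f \<in> R2 \<rightarrow>\<^sub>M N" if "f \<in> borel \<rightarrow>\<^sub>M N" for N f using measurable_cong_sets[OF s2 refl, of N] that by simp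
  obtain e :: "nat \<Rightarrow> 'w" where e: "\<And>y r. r > 0 \<Longrightarrow> \<exists>k. dist (e k) y < r" using cover_index by blast
  define r where "r = \<epsilon> / 2"
  have r: "r > 0" using eps by (simp add: r_def)
  define idx where "idx y = (LEAST k. dist (e k) y < r)" for y
  have idx1: "dist (e (idx y)) y < r" for y
    unfolding idx_def using e[OF r, of y] by (rule LeastI_ex)
  have close: "dist y y' < \<epsilon>" if "idx y = idx y'" for y y'
  proof -
    have "dist y y' \<le> dist (e (idx y)) y + dist (e (idx y)) y'" by (simp add: dist_triangle3)
    also have "\<dots> < r + r" using idx1[of y] idx1[of y'] that by simp
    finally show ?thesis by (simp add: r_def)
  qed
  have idx_meas[measurable]: "idx \<in> borel \<rightarrow>\<^sub>M count_space UNIV"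
    unfolding idx_def by (rule measurable_Least) measurable
  define fib1 where "fib1 k = {p::'w\<times>'w. idx (snd p) = k}" for k
  define fib2 where "fib2 k = {p::'w\<times>'w. idx (fst p) = k}" for k
  have fib1_sets: "fib1 k \<in> sets R1" for k unfolding s1 fib1_def by measurable
  have fib2_sets: "fib2 k \<in> sets R2" for k unfolding s2 fib2_def by measurable
  define q where "q k = emeasure R1 (fib1 k)" for k
  have q2: "emeasure R2 (fib2 k) = q k" for k
  proof -
    have "emeasure (distr R1 borel snd) (idx -` {k}) = emeasure (distr R2 borel fst) (idx -` {k})"
      by (simp add: mid)
    moreover have "idx -` {k} \<in> sets borel" using measurable_sets[OF idx_meas, of "{k}"] by simp
    ultimately show ?thesis
      by (simp add: emeasure_distr m1 m2 q_def fib1_def fib2_def sp1 sp2 vimage_def)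
  qed
  have q_fin: "q k \<noteq> \<infinity>" for k unfolding q_def by simp
  have phi1[measurable]: "(\<lambda>p. idx (snd p)) \<in> R1 \<rightarrow>\<^sub>M count_space UNIV" by (intro m1) measurable
  have phi2[measurable]: "(\<lambda>p. idx (fst p)) \<in> R2 \<rightarrow>\<^sub>M count_space UNIV" by (intro m2) measurable
  define U1 where "U1 k = uniform_measure R1 (fib1 k)" for k
  define U2 where "U2 k = uniform_measure R2 (fib2 k)" for k
  have pU1: "prob_space (U1 k)" if "q k \<noteq> 0" for k
    unfolding U1_def using that q_fin[of k] by (intro prob_space_uniform_measure) (auto simp: q_def)
  have pU2: "prob_space (U2 k)" if "q k \<noteq> 0" for k
    unfolding U2_def using that q_fin[of k] q2[of k] by (intro prob_space_uniform_measure) auto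
  have sU1: "sets (U1 k) = sets borel" for k by (simp add: U1_def s1)
  have sU2: "sets (U2 k) = sets borel" for k by (simp add: U2_def s2)
  have sU12: "sets (U1 k \<Otimes>\<^sub>M U2 k) = sets (borel \<Otimes>\<^sub>M borel)" for k
    by (rule sets_pair_measure_cong) (simp_all add: sU1 sU2)
  have mU12: "f \<in> (U1 k \<Otimes>\<^sub>M U2 k) \<rightarrow>\<^sub>M N" if "f \<in> (borel \<Otimes>\<^sub>M borel) \<rightarrow>\<^sub>M N" for k N f
    using that by (simp add: measurable_cong_sets[OF sU12[of k] refl])
  define h where "h x = (fst (fst x), snd (snd x))" for x :: "('w\<times>'w)\<times>('w\<times>'w)"
  have h_meas: "h \<in> (U1 k \<Otimes>\<^sub>M U2 k) \<rightarrow>\<^sub>M borel" for k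
    unfolding h_def by (intro mU12) (simp add: borel_prod[symmetric])
  define G where "G k = (if q k = 0 then R1 else distr (U1 k \<Otimes>\<^sub>M U2 k) borel h)" for k
  have G_space: "G k \<in> space (prob_algebra borel)" for k
  proof (cases "q k = 0")
    case True then show ?thesis by (simp add: G_def space_prob_algebra s1 p1)
  next
    case False
    then show ?thesis unfolding G_def space_prob_algebra
      by (auto intro!: prob_space.prob_space_distr prob_space_pair pU1 pU2 h_meas)
  qed
  define N where "N = distr R1 (count_space UNIV) (\<lambda>p. idx (snd p))"
  have sN: "sets N = sets (count_space UNIV)" by (simp add: N_def)
  have N_space: "N \<in> space (prob_algebra (count_space UNIV))"
    unfolding space_prob_algebra N_def by (auto intro!: R1.prob_space_distr)
  have G_meas0: "G \<in> count_space UNIV \<rightarrow>\<^sub>M prob_algebra borel"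
    unfolding measurable_count_space_eq1 using G_space by auto
  have G_meas: "G \<in> N \<rightarrow>\<^sub>M prob_algebra borel"
    unfolding measurable_cong_sets[OF sN refl] by (rule G_meas0)
  define R where "R = N \<bind> G"
  have pR: "prob_space R" unfolding R_def by (rule prob_space_bind'[OF N_space G_meas0])
  have sR: "sets R = sets borel" unfolding R_def by (rule sets_bind'[OF N_space G_meas0])
  have Gm_sub: "G \<in> N \<rightarrow>\<^sub>M subprob_algebra borel" by (rule measurable_prob_algebraD[OF G_meas])
  have spN: "space N = UNIV" by (simp add: N_def)
  have G_emeas: "emeasure (G k) X = emeasure (U1 k \<Otimes>\<^sub>M U2 k) (h -` X)"
    if "q k \<noteq> 0" "X \<in> sets borel" for k X
  proof -
    have "space (U1 k \<Otimes>\<^sub>M U2 k) = UNIV" by (simp add: space_pair_measure U1_def U2_def sp1 sp2)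
    then show ?thesis using that h_meas[of k] by (simp add: G_def emeasure_distr)
  qed
  have sG: "sets (G k) = sets borel" for k using G_space[of k] by (simp add: space_prob_algebra)
  have spG: "space (G k) = UNIV" for k using sets_eq_imp_space_eq[OF sG[of k]] by simp
  have emeasure_distr_G: "emeasure (distr (G k) borel f) B = emeasure (G k) (f -` B)"
    if "f \<in> borel \<rightarrow>\<^sub>M borel" "B \<in> sets borel" for k and f :: "'w\<times>'w \<Rightarrow> 'w" and B
  proof -
    have "f \<in> G k \<rightarrow>\<^sub>M borel" using that(1) by (simp add: measurable_cong_sets[OF sG[of k] refl])
    then show ?thesis using that(2) by (simp add: emeasure_distr spG)
  qed
  have U12_times: "emeasure (U1 k \<Otimes>\<^sub>M U2 k) (A \<times> B) = emeasure (U1 k) A * emeasure (U2 k) B"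
    if "q k \<noteq> 0" "A \<in> sets borel" "B \<in> sets borel" for k A B
    using sigma_finite_measure.emeasure_pair_measure_Times[OF prob_space_imp_sigma_finite[OF pU2[OF that(1)]], of A "U1 k" B]
      that by (simp add: sU1 sU2)
  have U1_UNIV: "emeasure (U1 k) UNIV = 1" if "q k \<noteq> 0" for k
    using prob_space.emeasure_space_1[OF pU1[OF that]] by (simp add: U1_def sp1)
  have U2_UNIV: "emeasure (U2 k) UNIV = 1" if "q k \<noteq> 0" for k
    using prob_space.emeasure_space_1[OF pU2[OF that]] by (simp add: U2_def sp2)
  have cancel: "(a / q k) * q k = a" if "q k \<noteq> 0" for a k
    using that q_fin[of k] by (simp add: ennreal_divide_times top.not_eq_extremum)
  have R_fst: "distr R borel fst = distr R1 borel fst"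
  proof -
    have Dm: "(\<lambda>k. distr (G k) borel fst) \<in> N \<rightarrow>\<^sub>M subprob_algebra borel"
      by (rule measurable_compose[OF Gm_sub measurable_distr[OF fst_borel]])
    have "distr R borel fst = N \<bind> (\<lambda>k. distr (G k) borel fst)"
      unfolding R_def by (rule distr_bind[OF Gm_sub]) (simp_all add: spN)
    also have "\<dots> = distr R1 borel fst"
    proof (rule measure_eqI)
      show "sets (N \<bind> (\<lambda>k. distr (G k) borel fst)) = sets (distr R1 borel fst)"
        using sets_bind_measurable[OF Dm] by (simp add: spN)
      fix B assume "B \<in> sets (N \<bind> (\<lambda>k. distr (G k) borel fst))"
      then have B: "B \<in> sets borel" using sets_bind_measurable[OF Dm] by (simp add: spN)
      have FB: "(fst -` B :: ('w\<times>'w) set) \<in> sets borel" using measurable_sets[OF fst_borel B] by simp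
      have trm: "emeasure (distr (G k) borel fst) B * q k = emeasure R1 (fib1 k \<inter> fst -` B)" for k
      proof (cases "q k = 0")
        case True
        have "emeasure R1 (fib1 k \<inter> fst -` B) \<le> q k" unfolding q_def
          by (rule emeasure_mono) (auto simp: fib1_sets)
        then show ?thesis using True by simp
      next
        case False
        have "h -` (fst -` B) = (fst -` B) \<times> UNIV" by (auto simp: h_def)
        then have "emeasure (distr (G k) borel fst) B = emeasure (U1 k) (fst -` B)"
          using FB B False by (simp add: emeasure_distr_G G_emeas U12_times U2_UNIV)
        also have "\<dots> = emeasure R1 (fib1 k \<inter> fst -` B) / q k"
          unfolding U1_def q_def using fib1_sets FB s1 by simp
        finally show ?thesis using cancel[OF False] by simp
      qed
      have "emeasure (N \<bind> (\<lambda>k. distr (G k) borel fst)) B = (\<integral>\<^sup>+ k. emeasure (distr (G k) borel fst) B \<partial>N)"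
        by (rule emeasure_bind[OF _ Dm]) (simp_all add: spN B)
      also have "\<dots> = (\<integral>\<^sup>+ p. emeasure (distr (G (idx (snd p))) borel fst) B \<partial>R1)"
        unfolding N_def by (rule nn_integral_distr[OF phi1]) (simp add: measurable_count_space_eq1)
      also have "\<dots> = (\<Sum>k. emeasure (distr (G k) borel fst) B * q k)"
        by (subst sum_fibers[OF phi1]) (simp add: q_def fib1_def sp1)
      also have "\<dots> = (\<Sum>k. emeasure R1 (fib1 k \<inter> fst -` B))" by (simp add: trm)
      also have "\<dots> = emeasure R1 (\<Union>k. fib1 k \<inter> fst -` B)"
        by (rule suminf_emeasure) (auto simp: fib1_sets FB s1 disjoint_family_on_def fib1_def)
      also have "(\<Union>k. fib1 k \<inter> fst -` B) = fst -` B \<inter> space R1" by (auto simp: fib1_def sp1)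
      also have "emeasure R1 \<dots> = emeasure (distr R1 borel fst) B"
        by (rule emeasure_distr[symmetric]) (simp_all add: m1 B)
      finally show "emeasure (N \<bind> (\<lambda>k. distr (G k) borel fst)) B = emeasure (distr R1 borel fst) B" .
    qed
    finally show ?thesis .
  qed
  have R_snd: "distr R borel snd = distr R2 borel snd"
  proof -
    have Dm: "(\<lambda>k. distr (G k) borel snd) \<in> N \<rightarrow>\<^sub>M subprob_algebra borel"
      by (rule measurable_compose[OF Gm_sub measurable_distr[OF snd_borel]])
    have "distr R borel snd = N \<bind> (\<lambda>k. distr (G k) borel snd)"
      unfolding R_def by (rule distr_bind[OF Gm_sub]) (simp_all add: spN)
    also have "\<dots> = distr R2 borel snd"
    proof (rule measure_eqI)
      show "sets (N \<bind> (\<lambda>k. distr (G k) borel snd)) = sets (distr R2 borel snd)"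
        using sets_bind_measurable[OF Dm] by (simp add: spN)
      fix B assume "B \<in> sets (N \<bind> (\<lambda>k. distr (G k) borel snd))"
      then have B: "B \<in> sets borel" using sets_bind_measurable[OF Dm] by (simp add: spN)
      have FB: "(snd -` B :: ('w\<times>'w) set) \<in> sets borel" using measurable_sets[OF snd_borel B] by simp
      have trm: "emeasure (distr (G k) borel snd) B * q k = emeasure R2 (fib2 k \<inter> snd -` B)" for k
      proof (cases "q k = 0")
        case True
        have "emeasure R2 (fib2 k \<inter> snd -` B) \<le> q k" unfolding q2[symmetric]
          by (rule emeasure_mono) (auto simp: fib2_sets)
        then show ?thesis using True by simp
      next
        case False
        have "h -` (snd -` B) = UNIV \<times> (snd -` B)" by (auto simp: h_def)
        then have "emeasure (distr (G k) borel snd) B = emeasure (U2 k) (snd -` B)"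
          using FB B False by (simp add: emeasure_distr_G G_emeas U12_times U1_UNIV)
        also have "\<dots> = emeasure R2 (fib2 k \<inter> snd -` B) / q k"
          unfolding U2_def q2[symmetric] using fib2_sets FB s2 by simp
        finally show ?thesis using cancel[OF False] by simp
      qed
      have "emeasure (N \<bind> (\<lambda>k. distr (G k) borel snd)) B = (\<integral>\<^sup>+ k. emeasure (distr (G k) borel snd) B \<partial>N)"
        by (rule emeasure_bind[OF _ Dm]) (simp_all add: spN B)
      also have "\<dots> = (\<integral>\<^sup>+ p. emeasure (distr (G (idx (snd p))) borel snd) B \<partial>R1)"
        unfolding N_def by (rule nn_integral_distr[OF phi1]) (simp add: measurable_count_space_eq1)
      also have "\<dots> = (\<Sum>k. emeasure (distr (G k) borel snd) B * q k)"
        by (subst sum_fibers[OF phi1]) (simp add: q_def fib1_def sp1)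
      also have "\<dots> = (\<Sum>k. emeasure R2 (fib2 k \<inter> snd -` B))" by (simp add: trm)
      also have "\<dots> = emeasure R2 (\<Union>k. fib2 k \<inter> snd -` B)"
        by (rule suminf_emeasure) (auto simp: fib2_sets FB s2 disjoint_family_on_def fib2_def)
      also have "(\<Union>k. fib2 k \<inter> snd -` B) = snd -` B \<inter> space R2" by (auto simp: fib2_def sp2)
      also have "emeasure R2 \<dots> = emeasure (distr R2 borel snd) B"
        by (rule emeasure_distr[symmetric]) (simp_all add: m2 B)
      finally show "emeasure (N \<bind> (\<lambda>k. distr (G k) borel snd)) B = emeasure (distr R2 borel snd) B" .
    qed
    finally show ?thesis .
  qed
  define d where "d x = ennreal (dist (fst x) (snd x))" for x :: "'w \<times> 'w"
  have d_meas[measurable]: "d \<in> borel_measurable borel" unfolding d_def by measurable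
  define C1 where "C1 k = (\<integral>\<^sup>+ x. d x * indicator (fib1 k) x \<partial>R1)" for k
  define C2 where "C2 k = (\<integral>\<^sup>+ x. d x * indicator (fib2 k) x \<partial>R2)" for k
  have costG: "cost (G k) * q k \<le> C1 k + ennreal \<epsilon> * q k + C2 k" for k
  proof (cases "q k = 0")
    case True then show ?thesis by simp
  next
    case False
    note pU1' = pU1[OF False] and pU2' = pU2[OF False]
    interpret P12: prob_space "U1 k \<Otimes>\<^sub>M U2 k" by (rule prob_space_pair[OF pU1' pU2'])
    have dU1: "d \<in> borel_measurable (U1 k)" by (simp add: measurable_cong_sets[OF sU1[of k] refl])
    have dU2: "d \<in> borel_measurable (U2 k)" by (simp add: measurable_cong_sets[OF sU2[of k] refl])
    have AE1: "AE x in U1 k. idx (snd x) = k"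
      unfolding U1_def by (rule AE_uniform_measureI[OF fib1_sets]) (simp add: fib1_def)
    have AE2: "AE x in U2 k. idx (fst x) = k"
      unfolding U2_def by (rule AE_uniform_measureI[OF fib2_sets]) (simp add: fib2_def)
    have AE1': "AE x in U1 k \<Otimes>\<^sub>M U2 k. idx (snd (fst x)) = k"
      using AE_distrD[OF measurable_fst, of "\<lambda>x. idx (snd x) = k" "U1 k" "U2 k"]
        prob_space.distr_pair_fst[OF pU2', of "U1 k"] AE1 by metis
    have AE2': "AE x in U1 k \<Otimes>\<^sub>M U2 k. idx (fst (snd x)) = k"
      using AE_distrD[OF measurable_snd, of "\<lambda>x. idx (fst x) = k" "U1 k" "U2 k"]
        distr_pair_snd'[OF pU1' pU2'] AE2 by metis
    have "cost (G k) = (\<integral>\<^sup>+ x. d (h x) \<partial>(U1 k \<Otimes>\<^sub>M U2 k))"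
      unfolding cost_def G_def using False d_def
      by (simp add: nn_integral_distr[OF h_meas] d_meas)
    also have "\<dots> \<le> (\<integral>\<^sup>+ x. d (fst x) + ennreal \<epsilon> + d (snd x) \<partial>(U1 k \<Otimes>\<^sub>M U2 k))"
    proof (rule nn_integral_mono_AE)
      show "AE x in U1 k \<Otimes>\<^sub>M U2 k. d (h x) \<le> d (fst x) + ennreal \<epsilon> + d (snd x)"
        using AE1' AE2'
      proof eventually_elim
        case (elim x)
        obtain a b c e' where x: "x = ((a, b), (c, e'))" by (metis prod.collapse)
        have "dist b c < \<epsilon>" using close[of b c] elim by (simp add: x)
        moreover have "dist a e' \<le> dist a b + dist b c + dist c e'"
          by (metis dist_triangle add_right_mono order_trans)
        ultimately have "dist a e' \<le> dist a b + \<epsilon> + dist c e'" by simp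
        then have "ennreal (dist a e') \<le> ennreal (dist a b + \<epsilon> + dist c e')" by (rule ennreal_leI)
        then show ?case using eps by (simp add: x d_def h_def ennreal_plus[symmetric] del: ennreal_plus)
      qed
    qed
    also have "\<dots> = (\<integral>\<^sup>+ x. d (fst x) \<partial>(U1 k \<Otimes>\<^sub>M U2 k)) + ennreal \<epsilon> + (\<integral>\<^sup>+ x. d (snd x) \<partial>(U1 k \<Otimes>\<^sub>M U2 k))"
    proof -
      have m1': "(\<lambda>x. d (fst x)) \<in> borel_measurable (U1 k \<Otimes>\<^sub>M U2 k)"
        using dU1 by measurable
      have m2': "(\<lambda>x. d (snd x)) \<in> borel_measurable (U1 k \<Otimes>\<^sub>M U2 k)"
        using dU2 by measurable
      show ?thesis
        using m1' m2' by (simp add: nn_integral_add P12.emeasure_space_1)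
    qed
    also have "(\<integral>\<^sup>+ x. d (fst x) \<partial>(U1 k \<Otimes>\<^sub>M U2 k)) = (\<integral>\<^sup>+ x. d x \<partial>U1 k)"
      using nn_integral_distr[OF measurable_fst, of d "U1 k" "U2 k"] prob_space.distr_pair_fst[OF pU2', of "U1 k"] dU1
      by simp
    also have "(\<integral>\<^sup>+ x. d (snd x) \<partial>(U1 k \<Otimes>\<^sub>M U2 k)) = (\<integral>\<^sup>+ x. d x \<partial>U2 k)"
      using nn_integral_distr[OF measurable_snd[of "U1 k" "U2 k"], of d] distr_pair_snd'[OF pU1' pU2'] dU2
      by simp
    also have "(\<integral>\<^sup>+ x. d x \<partial>U1 k) = C1 k / q k"
      unfolding U1_def C1_def q_def
      by (rule nn_integral_uniform_measure[OF _ fib1_sets]) (simp add: measurable_cong_sets[OF s1 refl])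
    also have "(\<integral>\<^sup>+ x. d x \<partial>U2 k) = C2 k / q k"
      unfolding U2_def C2_def q2[symmetric]
      by (rule nn_integral_uniform_measure[OF _ fib2_sets]) (simp add: measurable_cong_sets[OF s2 refl])
    finally have "cost (G k) \<le> C1 k / q k + ennreal \<epsilon> + C2 k / q k" .
    then have "cost (G k) * q k \<le> (C1 k / q k + ennreal \<epsilon> + C2 k / q k) * q k"
      by (rule mult_right_mono) simp
    also have "\<dots> = C1 k + ennreal \<epsilon> * q k + C2 k"
      by (simp add: distrib_right cancel[OF False])
    finally show ?thesis .
  qed
  have R_cost: "cost R \<le> cost R1 + cost R2 + ennreal \<epsilon>"
  proof -
    have "cost R = (\<integral>\<^sup>+ k. cost (G k) \<partial>N)"
      unfolding cost_def R_def by (rule nn_integral_bind[OF _ Gm_sub]) measurable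
    also have "\<dots> = (\<integral>\<^sup>+ p. cost (G (idx (snd p))) \<partial>R1)"
      unfolding N_def by (rule nn_integral_distr[OF phi1]) (simp add: measurable_count_space_eq1)
    also have "\<dots> = (\<Sum>k. cost (G k) * q k)"
      by (subst sum_fibers[OF phi1]) (simp add: q_def fib1_def sp1)
    also have "\<dots> \<le> (\<Sum>k. C1 k + ennreal \<epsilon> * q k + C2 k)"
      by (intro suminf_le costG) auto
    also have "\<dots> = (\<Sum>k. C1 k) + ennreal \<epsilon> * (\<Sum>k. q k) + (\<Sum>k. C2 k)"
      by (simp add: suminf_add[symmetric] ennreal_suminf_cmult)
    also have "(\<Sum>k. C1 k) = cost R1"
      using sum_fiber_parts[OF phi1, of d] d_meas
      by (simp add: C1_def fib1_def sp1 cost_def d_def measurable_cong_sets[OF s1 refl])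
    also have "(\<Sum>k. C2 k) = cost R2"
      using sum_fiber_parts[OF phi2, of d] d_meas
      by (simp add: C2_def fib2_def sp2 cost_def d_def measurable_cong_sets[OF s2 refl])
    also have "(\<Sum>k. q k) = 1"
    proof -
      have "(\<Sum>k. q k) = emeasure R1 (\<Union>k. fib1 k)"
        unfolding q_def using fib1_sets by (intro suminf_emeasure) (auto simp: disjoint_family_on_def fib1_def)
      also have "(\<Union>k. fib1 k) = space R1" by (auto simp: fib1_def sp1)
      finally show ?thesis by (simp add: R1.emeasure_space_1)
    qed
    finally show ?thesis by (simp add: ac_simps)
  qed
  show ?thesis using pR sR R_fst R_snd R_cost by (rule that)
qed



lemma couplings_iff:
  assumes sP: "sets P = sets borel" and sQ: "sets Q = sets borel"
  shows "R \<in> couplings P Q \<longleftrightarrow> prob_space R \<and> sets R = sets borel \<and> distr R borel fst = P \<and> distr R borel snd = Q"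
proof -
  have "sets (P \<Otimes>\<^sub>M Q) = sets (borel \<Otimes>\<^sub>M borel)" by (rule sets_pair_measure_cong[OF sP sQ])
  then have s: "sets (P \<Otimes>\<^sub>M Q) = sets borel" by (metis borel_prod)
  have "distr R P fst = distr R borel fst" by (rule distr_cong) (simp_all add: sP)
  moreover have "distr R Q snd = distr R borel snd" by (rule distr_cong) (simp_all add: sQ)
  ultimately show ?thesis unfolding couplings_def using s by auto
qed

lemma wasserstein1_cost: "wasserstein1 P Q = (INF R \<in> couplings P Q. cost R)"
  unfolding wasserstein1_def cost_def by simp

lemma wass_triangle:
  fixes P Q T :: "'w::polish_space measure"
  assumes sP: "sets P = sets borel" and sQ: "sets Q = sets borel" and sT: "sets T = sets borel"
  shows "wasserstein1 P T \<le> wasserstein1 P Q + wasserstein1 Q T"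
proof (rule ennreal_le_epsilon)
  fix e :: real assume fin: "wasserstein1 P Q + wasserstein1 Q T < top" and e: "0 < e"
  define e3 where "e3 = e / 3"
  have e3: "e3 > 0" using e by (simp add: e3_def)
  have A: "wasserstein1 P Q < top" and B: "wasserstein1 Q T < top" using fin by (auto simp: top_unique)
  have "wasserstein1 P Q < wasserstein1 P Q + ennreal e3"
    using A e3 ennreal_add_left_cancel_less[of "wasserstein1 P Q" 0 "ennreal e3"] by simp
  then obtain R1 where R1: "R1 \<in> couplings P Q" "cost R1 < wasserstein1 P Q + ennreal e3"
    unfolding wasserstein1_cost by (auto simp: INF_less_iff)
  have "wasserstein1 Q T < wasserstein1 Q T + ennreal e3"
    using B e3 ennreal_add_left_cancel_less[of "wasserstein1 Q T" 0 "ennreal e3"] by simp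
  then obtain R2 where R2: "R2 \<in> couplings Q T" "cost R2 < wasserstein1 Q T + ennreal e3"
    unfolding wasserstein1_cost by (auto simp: INF_less_iff)
  have c1: "prob_space R1" "sets R1 = sets borel" "distr R1 borel fst = P" "distr R1 borel snd = Q"
    using R1(1) couplings_iff[OF sP sQ] by auto
  have c2: "prob_space R2" "sets R2 = sets borel" "distr R2 borel fst = Q" "distr R2 borel snd = T"
    using R2(1) couplings_iff[OF sQ sT] by auto
  obtain R where R: "prob_space R" "sets R = sets borel"
    "distr R borel fst = distr R1 borel fst" "distr R borel snd = distr R2 borel snd"
    "cost R \<le> cost R1 + cost R2 + ennreal e3"
    using glue[OF c1(1,2) c2(1,2) _ e3] c1(4) c2(3) by metis
  have "R \<in> couplings P T" using R c1 c2 couplings_iff[OF sP sT] by auto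
  then have "wasserstein1 P T \<le> cost R" unfolding wasserstein1_cost by (rule INF_lower)
  also have "\<dots> \<le> cost R1 + cost R2 + ennreal e3" by (rule R(5))
  also have "\<dots> \<le> (wasserstein1 P Q + ennreal e3) + (wasserstein1 Q T + ennreal e3) + ennreal e3"
    using R1(2) R2(2) by (intro add_mono) auto
  also have "\<dots> = wasserstein1 P Q + wasserstein1 Q T + ennreal (e3 + e3 + e3)"
    using e3 by (simp add: ennreal_plus[symmetric] del: ennreal_plus)
  also have "e3 + e3 + e3 = e" by (simp add: e3_def)
  finally show "wasserstein1 P T \<le> wasserstein1 P Q + wasserstein1 Q T + ennreal e" .
qed

lemma swap_borel[measurable]: "(\<lambda>x. (snd x, fst x)) \<in> (borel :: ('a::second_countable_topology \<times> 'b::second_countable_topology) measure) \<rightarrow>\<^sub>M borel"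
  using measurable_Pair[OF snd_borel fst_borel] by (simp add: borel_prod)

lemma wass_sym_le:
  fixes P Q :: "'w::polish_space measure"
  assumes sP: "sets P = sets borel" and sQ: "sets Q = sets borel"
  shows "wasserstein1 P Q \<le> wasserstein1 Q P"
  unfolding wasserstein1_cost
proof (rule INF_greatest)
  fix R assume "R \<in> couplings Q P"
  then have c: "prob_space R" "sets R = sets borel" "distr R borel fst = Q" "distr R borel snd = P"
    using couplings_iff[OF sQ sP] by auto
  define S where "S = distr R borel (\<lambda>x. (snd x, fst x))"
  have sw: "(\<lambda>x. (snd x, fst x)) \<in> R \<rightarrow>\<^sub>M borel"
    using swap_borel by (simp add: measurable_cong_sets[OF c(2) refl])
  have fR: "fst \<in> R \<rightarrow>\<^sub>M borel" using fst_borel by (simp add: measurable_cong_sets[OF c(2) refl])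
  have sR: "snd \<in> R \<rightarrow>\<^sub>M borel" using snd_borel by (simp add: measurable_cong_sets[OF c(2) refl])
  have "distr S borel fst = distr R borel snd"
    unfolding S_def by (subst distr_distr) (simp_all add: sw comp_def)
  moreover have "distr S borel snd = distr R borel fst"
    unfolding S_def by (subst distr_distr) (simp_all add: sw comp_def)
  moreover have "prob_space S" unfolding S_def by (rule prob_space.prob_space_distr[OF c(1) sw])
  ultimately have "S \<in> couplings P Q" using c couplings_iff[OF sP sQ] by (auto simp: S_def)
  moreover have "cost S = cost R"
    unfolding S_def cost_def using sw by (simp add: nn_integral_distr dist_commute)
  ultimately show "(INF R \<in> couplings P Q. cost R) \<le> cost R" by (metis INF_lower)
qed

lemma wass_sym:
  fixes P Q :: "'w::polish_space measure"
  assumes sP: "sets P = sets borel" and sQ: "sets Q = sets borel"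
  shows "wasserstein1 P Q = wasserstein1 Q P"
  using wass_sym_le[OF sP sQ] wass_sym_le[OF sQ sP] by (rule antisym)



lemma product_coupling:
  fixes P Q :: "'w::polish_space measure"
  assumes sP: "sets P = sets borel" and sQ: "sets Q = sets borel" and pP: "prob_space P" and pQ: "prob_space Q"
  shows "P \<Otimes>\<^sub>M Q \<in> couplings P Q"
proof -
  have "sets (P \<Otimes>\<^sub>M Q) = sets (borel \<Otimes>\<^sub>M borel)" by (rule sets_pair_measure_cong[OF sP sQ])
  then have s: "sets (P \<Otimes>\<^sub>M Q) = sets borel" by (metis borel_prod)
  show ?thesis unfolding couplings_def
    using prob_space_pair[OF pP pQ] s prob_space.distr_pair_fst[OF pQ, of P] distr_pair_snd'[OF pP pQ]
    by auto
qed

lemma wass_convex: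
  fixes Q :: "'w::polish_space measure" and F :: "'v \<Rightarrow> 'w measure" and p :: "'v pmf"
  assumes sQ: "sets Q = sets borel" and pQ: "prob_space Q"
    and F: "\<And>v. F v \<in> space (prob_algebra borel)"
  shows "wasserstein1 Q (measure_pmf p \<bind> F) \<le> (\<integral>\<^sup>+ v. wasserstein1 Q (F v) \<partial>measure_pmf p)"
proof (rule ennreal_le_epsilon)
  fix e :: real assume e: "0 < e"
  have sF: "sets (F v) = sets borel" and pF: "prob_space (F v)" for v
    using F[of v] by (auto simp: space_prob_algebra)
  have "\<exists>R. R \<in> couplings Q (F v) \<and> cost R \<le> wasserstein1 Q (F v) + ennreal e" for v
  proof (cases "wasserstein1 Q (F v) < top")
    case True
    have "wasserstein1 Q (F v) < wasserstein1 Q (F v) + ennreal e"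
      using True e ennreal_add_left_cancel_less[of "wasserstein1 Q (F v)" 0 "ennreal e"] by simp
    then obtain R where "R \<in> couplings Q (F v)" "cost R < wasserstein1 Q (F v) + ennreal e"
      unfolding wasserstein1_cost by (auto simp: INF_less_iff)
    then show ?thesis by (auto intro: less_imp_le)
  next
    case False
    then have "wasserstein1 Q (F v) = top" using less_top by blast
    then have "wasserstein1 Q (F v) + ennreal e = top" by simp
    then show ?thesis using product_coupling[OF sQ sF pQ pF] by auto
  qed
  then obtain R where R: "\<And>v. R v \<in> couplings Q (F v)" "\<And>v. cost (R v) \<le> wasserstein1 Q (F v) + ennreal e"
    by metis
  have c: "prob_space (R v)" "sets (R v) = sets borel" "distr (R v) borel fst = Q" "distr (R v) borel snd = F v" for v
    using R(1)[of v] couplings_iff[OF sQ sF] by auto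
  have Rsp: "R v \<in> space (prob_algebra borel)" for v using c by (simp add: space_prob_algebra)
  have Rm: "R \<in> measure_pmf p \<rightarrow>\<^sub>M prob_algebra borel"
    by (simp add: measurable_cong_sets[OF sets_measure_pmf_count_space refl] measurable_count_space_eq1 Rsp)
  have Rm0: "R \<in> count_space UNIV \<rightarrow>\<^sub>M prob_algebra borel"
    by (simp add: measurable_count_space_eq1 Rsp)
  have Rms: "R \<in> measure_pmf p \<rightarrow>\<^sub>M subprob_algebra borel" by (rule measurable_prob_algebraD[OF Rm])
  have psp: "measure_pmf p \<in> space (prob_algebra (count_space UNIV))"
    by (simp add: space_prob_algebra measure_pmf.prob_space_axioms)
  define B where "B = measure_pmf p \<bind> R"
  have pB: "prob_space B" unfolding B_def by (rule prob_space_bind'[OF psp Rm0])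
  have sB: "sets B = sets borel" unfolding B_def by (rule sets_bind'[OF psp Rm0])
  have "distr B borel fst = measure_pmf p \<bind> (\<lambda>v. distr (R v) borel fst)"
    unfolding B_def by (rule distr_bind[OF Rms]) simp_all
  also have "\<dots> = measure_pmf p \<bind> (\<lambda>v. Q)" by (simp add: c)
  also have "\<dots> = Q" by (rule bind_const') (simp_all add: measure_pmf.prob_space_axioms pQ prob_space_imp_subprob_space)
  finally have B1: "distr B borel fst = Q" .
  have "distr B borel snd = measure_pmf p \<bind> (\<lambda>v. distr (R v) borel snd)"
    unfolding B_def by (rule distr_bind[OF Rms]) simp_all
  also have "\<dots> = measure_pmf p \<bind> F" by (simp add: c)
  finally have B2: "distr B borel snd = measure_pmf p \<bind> F" .
  have sPF: "sets (measure_pmf p \<bind> F) = sets borel"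
    using B2[symmetric] by simp
  have "B \<in> couplings Q (measure_pmf p \<bind> F)"
    using couplings_iff[OF sQ sPF] pB sB B1 B2 by auto
  then have "wasserstein1 Q (measure_pmf p \<bind> F) \<le> cost B"
    unfolding wasserstein1_cost by (rule INF_lower)
  also have "cost B = (\<integral>\<^sup>+ v. cost (R v) \<partial>measure_pmf p)"
    unfolding cost_def B_def by (rule nn_integral_bind[OF _ Rms]) measurable
  also have "\<dots> \<le> (\<integral>\<^sup>+ v. wasserstein1 Q (F v) + ennreal e \<partial>measure_pmf p)"
    by (rule nn_integral_mono) (rule R(2))
  also have "\<dots> = (\<integral>\<^sup>+ v. wasserstein1 Q (F v) \<partial>measure_pmf p) + ennreal e"
    by (simp add: nn_integral_add measure_pmf.emeasure_space_1)
  finally show "wasserstein1 Q (measure_pmf p \<bind> F) \<le> (\<integral>\<^sup>+ v. wasserstein1 Q (F v) \<partial>measure_pmf p) + ennreal e" .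
qed



lemma nn_integral_2mult_le: "(\<integral>\<^sup>+ x. 2 * f x \<partial>M) \<le> 2 * integral\<^sup>N M f"
  unfolding nn_integral_def[of M "\<lambda>x. 2 * f x"]
proof (rule SUP_least)
  fix g assume "g \<in> {g. simple_function M g \<and> g \<le> (\<lambda>x. 2 * f x)}"
  then have g: "simple_function M g" "\<And>x. g x \<le> 2 * f x" by (auto simp: le_fun_def)
  have i2: "inverse (2::ennreal) * 2 = 1"
    using ennreal_divide_self[of "2::ennreal"] by (simp add: divide_ennreal_def mult.commute)
  define h where "h x = inverse 2 * g x" for x
  have hs: "simple_function M h" unfolding h_def using g(1) by auto
  have i2': "2 * inverse (2::ennreal) = 1" using i2 by (simp only: mult.commute)
  have gh: "g x = 2 * h x" for x
  proof -
    have "2 * h x = (2 * inverse 2) * g x" by (simp only: h_def mult.assoc)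
    then show ?thesis using i2' by simp
  qed
  have hf: "h \<le> f"
  proof (rule le_funI)
    fix x
    have "h x = inverse 2 * g x" by (simp add: h_def)
    also have "\<dots> \<le> inverse 2 * (2 * f x)" by (rule mult_left_mono[OF g(2)]) simp
    also have "\<dots> = (inverse 2 * 2) * f x" by (simp only: mult.assoc)
    also have "\<dots> = f x" using i2 by simp
    finally show "h x \<le> f x" .
  qed
  have "integral\<^sup>S M g = 2 * integral\<^sup>S M h" unfolding gh using hs by simp
  also have "\<dots> \<le> 2 * integral\<^sup>N M f"
    unfolding nn_integral_def using hs hf by (intro mult_left_mono SUP_upper) auto
  finally show "integral\<^sup>S M g \<le> 2 * integral\<^sup>N M f" .
qed



lemma CC_PiE:
  fixes n :: nat
  assumes "u \<in> {..<n} \<rightarrow>\<^sub>E (UNIV::bool set)"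
  shows "{v \<in> {..<n} \<rightarrow>\<^sub>E (UNIV::bool set). \<forall>i \<in> {..<n} - J. v i = u i}
       = PiE {..<n} (\<lambda>i. if i \<in> J then UNIV else {u i})"
  using assms by (auto simp: PiE_iff extensional_def split: if_splits)

lemma card_CC:
  fixes n :: nat
  assumes "u \<in> {..<n} \<rightarrow>\<^sub>E (UNIV::bool set)" "J \<subseteq> {..<n}"
  shows "card {v \<in> {..<n} \<rightarrow>\<^sub>E (UNIV::bool set). \<forall>i \<in> {..<n} - J. v i = u i} = 2 ^ card J"
proof -
  have "card (PiE {..<n} (\<lambda>i. if i \<in> J then (UNIV::bool set) else {u i}))
      = (\<Prod>i<n. card (if i \<in> J then (UNIV::bool set) else {u i}))"
    by (rule card_PiE) simp
  also have "\<dots> = (\<Prod>i<n. if i \<in> J then 2 else 1)"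
    by (rule prod.cong) auto
  also have "\<dots> = (\<Prod>i\<in>{..<n} \<inter> {i. i \<in> J}. 2) * (\<Prod>i\<in>{..<n} \<inter> - {i. i \<in> J}. 1)"
    by (rule prod.If_cases) simp
  also have "{..<n} \<inter> {i. i \<in> J} = J" using assms(2) by auto
  finally show ?thesis using CC_PiE[OF assms(1)] by simp
qed

lemma count_swap:
  fixes g :: "(nat \<Rightarrow> bool) \<Rightarrow> ennreal" and n :: nat
  assumes J: "J \<subseteq> {..<n}"
  defines "V \<equiv> {..<n} \<rightarrow>\<^sub>E (UNIV::bool set)"
  defines "CC \<equiv> \<lambda>u. {v \<in> V. \<forall>i \<in> {..<n} - J. v i = u i}"
  shows "(\<Sum>u\<in>V. (\<Sum>v\<in>CC u. g v) / of_nat (card (CC u))) = (\<Sum>v\<in>V. g v)"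
proof -
  define c where "c = (of_nat (2 ^ card J) :: ennreal)"
  have c0: "c \<noteq> 0" unfolding c_def by simp
  have ctop: "c \<noteq> top" unfolding c_def by (rule ennreal_of_nat_neq_top)
  have finV: "finite V" by (simp add: V_def finite_PiE)
  have CCsub: "CC u \<subseteq> V" for u by (auto simp: CC_def)
  have sym: "v \<in> CC u \<longleftrightarrow> u \<in> CC v" if "u \<in> V" "v \<in> V" for u v
    using that by (auto simp: CC_def)
  have "(\<Sum>u\<in>V. (\<Sum>v\<in>CC u. g v) / of_nat (card (CC u))) = (\<Sum>u\<in>V. (\<Sum>v\<in>CC u. g v) / c)"
    by (rule sum.cong) (simp_all add: c_def CC_def V_def card_CC[OF _ J])
  also have "\<dots> = (\<Sum>u\<in>V. \<Sum>v\<in>CC u. g v) / c"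
    by (simp add: divide_ennreal_def sum_distrib_right)
  also have "(\<Sum>u\<in>V. \<Sum>v\<in>CC u. g v) = (\<Sum>u\<in>V. \<Sum>v\<in>V. if v \<in> CC u then g v else 0)"
  proof (rule sum.cong)
    fix u assume "u \<in> V"
    have "(\<Sum>v\<in>V. if v \<in> CC u then g v else 0) = sum g (V \<inter> CC u)"
      by (rule sum.inter_restrict[OF finV, symmetric])
    also have "V \<inter> CC u = CC u" using CCsub by auto
    finally show "(\<Sum>v\<in>CC u. g v) = (\<Sum>v\<in>V. if v \<in> CC u then g v else 0)" by simp
  qed simp
  also have "\<dots> = (\<Sum>v\<in>V. \<Sum>u\<in>V. if v \<in> CC u then g v else 0)" by (rule sum.swap)
  also have "\<dots> = (\<Sum>v\<in>V. g v * c)"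
  proof (rule sum.cong)
    fix v assume v: "v \<in> V"
    have "(\<Sum>u\<in>V. if v \<in> CC u then g v else 0) = (\<Sum>u\<in>V. if u \<in> CC v then g v else 0)"
      by (rule sum.cong) (use v sym in auto)
    also have "\<dots> = (\<Sum>u\<in>V \<inter> CC v. g v)" by (rule sum.inter_restrict[OF finV, symmetric])
    also have "V \<inter> CC v = CC v" using CCsub by auto
    also have "(\<Sum>u\<in>CC v. g v) = of_nat (card (CC v)) * g v" by simp
    also have "card (CC v) = 2 ^ card J" using v by (simp add: CC_def V_def card_CC[OF _ J])
    finally show "(\<Sum>u\<in>V. if v \<in> CC u then g v else 0) = g v * c" by (simp add: c_def mult.commute)
  qed simp
  also have "\<dots> = (\<Sum>v\<in>V. g v) * c" by (simp add: sum_distrib_right)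
  also have "(\<Sum>v\<in>V. g v) * c / c = (\<Sum>v\<in>V. g v)" by (rule ennreal_mult_divide_eq[OF c0 ctop])
  finally show ?thesis .
qed



theorem proposition7:
  fixes M :: "'z measure" and K :: "(nat \<Rightarrow> 'z) \<Rightarrow> 'w::polish_space measure"
    and n m :: nat
  assumes "prob_space M"
    and "K \<in> PiM {..<n} (\<lambda>_. M) \<rightarrow>\<^sub>M prob_algebra (borel :: 'w measure)"
    and "m \<le> n"
  shows "(\<integral>\<^sup>+ s. \<integral>\<^sup>+ J. \<integral>\<^sup>+ u.
            wasserstein1 (cond_law n K s u {}) (cond_law n K s u J)
          \<partial>measure_pmf (pmf_of_set ({..<n} \<rightarrow>\<^sub>E (UNIV::bool set)))
          \<partial>measure_pmf (pmf_of_set {J. J \<subseteq> {..<n} \<and> card J = m})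
          \<partial>PiM {..<2*n} (\<lambda>_. M))
       \<le> 2 * (\<integral>\<^sup>+ s. \<integral>\<^sup>+ u.
            wasserstein1 (cond_law n K s u {}) (cond_law n K s u {..<n})
          \<partial>measure_pmf (pmf_of_set ({..<n} \<rightarrow>\<^sub>E (UNIV::bool set)))
          \<partial>PiM {..<2*n} (\<lambda>_. M))"
proof -
  define V where "V = {..<n} \<rightarrow>\<^sub>E (UNIV::bool set)"
  define JS where "JS = {J. J \<subseteq> {..<n} \<and> card J = m}"
  have finV: "finite V" by (simp add: V_def finite_PiE)
  have neV: "V \<noteq> {}" by (simp add: V_def PiE_eq_empty_iff)
  have finJS: "finite JS" unfolding JS_def by (rule finite_subset[of _ "Pow {..<n}"]) auto
  have neJS: "JS \<noteq> {}" unfolding JS_def using assms(3) by (auto intro!: exI[of _ "{..<m}"])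
  have pw: "(\<integral>\<^sup>+ J. \<integral>\<^sup>+ u. wasserstein1 (cond_law n K s u {}) (cond_law n K s u J)
          \<partial>measure_pmf (pmf_of_set V) \<partial>measure_pmf (pmf_of_set JS))
       \<le> 2 * (\<integral>\<^sup>+ u. wasserstein1 (cond_law n K s u {}) (cond_law n K s u {..<n}) \<partial>measure_pmf (pmf_of_set V))"
    if s: "s \<in> space (PiM {..<2*n} (\<lambda>_. M))" for s
  proof -
    define F where "F v = K (select_sample n s v)" for v
    have sel: "select_sample n s v \<in> space (PiM {..<n} (\<lambda>_. M))" for v
    proof -
      have "s j \<in> space M" if "j < 2 * n" for j using s that by (auto simp: space_PiM PiE_iff)
      then show ?thesis by (auto simp: space_PiM PiE_iff select_sample_def)
    qed
    have Fsp: "F v \<in> space (prob_algebra borel)" for v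
      unfolding F_def by (rule measurable_space[OF assms(2) sel])
    have sF: "sets (F v) = sets borel" and pF: "prob_space (F v)" for v
      using Fsp[of v] by (auto simp: space_prob_algebra)
    have Fm0: "F \<in> count_space UNIV \<rightarrow>\<^sub>M prob_algebra borel"
      by (simp add: measurable_count_space_eq1 Fsp)
    have psp: "measure_pmf p \<in> space (prob_algebra (count_space UNIV))" for p :: "(nat \<Rightarrow> bool) pmf"
      by (simp add: space_prob_algebra measure_pmf.prob_space_axioms)
    define CC where "CC u J = {v \<in> V. \<forall>i \<in> {..<n} - J. v i = u i}" for u J
    have cl: "cond_law n K s u J = measure_pmf (pmf_of_set (CC u J)) \<bind> F" for u J
      unfolding cond_law_def CC_def V_def F_def[abs_def] by simp
    have s_cl: "sets (cond_law n K s u J) = sets borel" and p_cl: "prob_space (cond_law n K s u J)" for u J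
      unfolding cl by (rule sets_bind'[OF psp Fm0], rule prob_space_bind'[OF psp Fm0])
    define Qm where "Qm = measure_pmf (pmf_of_set V) \<bind> F"
    have sQ: "sets Qm = sets borel" and pQ: "prob_space Qm"
      unfolding Qm_def by (rule sets_bind'[OF psp Fm0], rule prob_space_bind'[OF psp Fm0])
    have CC_all: "CC u {..<n} = V" for u by (auto simp: CC_def)
    have cl_all: "cond_law n K s u {..<n} = Qm" for u by (simp add: cl CC_all Qm_def)
    have cl_none: "cond_law n K s u {} = F u" if u: "u \<in> V" for u
    proof -
      have "CC u {} = {u}" using u by (auto simp: CC_def V_def intro: PiE_ext)
      then have "cond_law n K s u {} = measure_pmf (return_pmf u) \<bind> F" by (simp add: cl pmf_of_set_singleton)
      also have "\<dots> = return (count_space UNIV) u \<bind> F" by (simp add: return_pmf.rep_eq)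
      also have "\<dots> = F u" by (rule bind_return[OF measurable_prob_algebraD[OF Fm0]]) simp
      finally show ?thesis .
    qed
    have finCC: "finite (CC u J)" for u J using finV by (auto simp: CC_def)
    have neCC: "CC u J \<noteq> {}" if "u \<in> V" for u J using that by (auto simp: CC_def)
    define g where "g v = wasserstein1 (F v) Qm" for v
    have bound: "wasserstein1 (cond_law n K s u {}) (cond_law n K s u J)
        \<le> g u + (\<integral>\<^sup>+ v. g v \<partial>measure_pmf (pmf_of_set (CC u J)))" if u: "u \<in> V" for u J
    proof -
      have "wasserstein1 (cond_law n K s u {}) (cond_law n K s u J)
          \<le> wasserstein1 (F u) Qm + wasserstein1 Qm (cond_law n K s u J)"
        unfolding cl_none[OF u] by (rule wass_triangle[OF sF sQ s_cl])
      also have "wasserstein1 Qm (cond_law n K s u J) \<le> (\<integral>\<^sup>+ v. wasserstein1 Qm (F v) \<partial>measure_pmf (pmf_of_set (CC u J)))"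
        unfolding cl by (rule wass_convex[OF sQ pQ Fsp])
      also have "\<dots> = (\<integral>\<^sup>+ v. g v \<partial>measure_pmf (pmf_of_set (CC u J)))"
        unfolding g_def by (rule nn_integral_cong) (rule wass_sym[OF sQ sF])
      finally show ?thesis by (simp add: g_def add_mono)
    qed
    have inner: "(\<integral>\<^sup>+ u. wasserstein1 (cond_law n K s u {}) (cond_law n K s u J) \<partial>measure_pmf (pmf_of_set V))
        \<le> 2 * (\<integral>\<^sup>+ u. g u \<partial>measure_pmf (pmf_of_set V))" if J: "J \<in> JS" for J
    proof -
      have "(\<integral>\<^sup>+ u. wasserstein1 (cond_law n K s u {}) (cond_law n K s u J) \<partial>measure_pmf (pmf_of_set V))
          \<le> (\<integral>\<^sup>+ u. g u + (\<integral>\<^sup>+ v. g v \<partial>measure_pmf (pmf_of_set (CC u J))) \<partial>measure_pmf (pmf_of_set V))"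
        by (rule nn_integral_mono_AE) (simp add: AE_measure_pmf_iff finV neV bound)
      also have "\<dots> = (\<integral>\<^sup>+ u. g u \<partial>measure_pmf (pmf_of_set V))
          + (\<integral>\<^sup>+ u. (\<integral>\<^sup>+ v. g v \<partial>measure_pmf (pmf_of_set (CC u J))) \<partial>measure_pmf (pmf_of_set V))"
        by (rule nn_integral_add) simp_all
      also have "(\<integral>\<^sup>+ u. (\<integral>\<^sup>+ v. g v \<partial>measure_pmf (pmf_of_set (CC u J))) \<partial>measure_pmf (pmf_of_set V))
          = (\<integral>\<^sup>+ u. g u \<partial>measure_pmf (pmf_of_set V))"
      proof -
        have "(\<integral>\<^sup>+ u. (\<integral>\<^sup>+ v. g v \<partial>measure_pmf (pmf_of_set (CC u J))) \<partial>measure_pmf (pmf_of_set V))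
            = (\<Sum>u\<in>V. (\<Sum>v\<in>CC u J. g v) / of_nat (card (CC u J))) / of_nat (card V)"
          by (simp add: nn_integral_pmf_of_set finV neV finCC neCC cong: sum.cong)
        also have "(\<Sum>u\<in>V. (\<Sum>v\<in>CC u J. g v) / of_nat (card (CC u J))) = (\<Sum>v\<in>V. g v)"
          using count_swap[of J n g] J by (simp add: JS_def CC_def V_def)
        finally show ?thesis by (simp add: nn_integral_pmf_of_set finV neV)
      qed
      finally show ?thesis by (simp add: mult_2)
    qed
    have "(\<integral>\<^sup>+ J. \<integral>\<^sup>+ u. wasserstein1 (cond_law n K s u {}) (cond_law n K s u J)
          \<partial>measure_pmf (pmf_of_set V) \<partial>measure_pmf (pmf_of_set JS))
        \<le> (\<integral>\<^sup>+ J. 2 * (\<integral>\<^sup>+ u. g u \<partial>measure_pmf (pmf_of_set V)) \<partial>measure_pmf (pmf_of_set JS))"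
      by (rule nn_integral_mono_AE) (simp add: AE_measure_pmf_iff finJS neJS inner)
    also have "\<dots> = 2 * (\<integral>\<^sup>+ u. g u \<partial>measure_pmf (pmf_of_set V))"
      by (simp add: measure_pmf.emeasure_space_1)
    also have "(\<integral>\<^sup>+ u. g u \<partial>measure_pmf (pmf_of_set V))
        = (\<integral>\<^sup>+ u. wasserstein1 (cond_law n K s u {}) (cond_law n K s u {..<n}) \<partial>measure_pmf (pmf_of_set V))"
      by (rule nn_integral_cong_AE) (simp add: AE_measure_pmf_iff finV neV g_def cl_none cl_all)
    finally show ?thesis .
  qed
  have "(\<integral>\<^sup>+ s. \<integral>\<^sup>+ J. \<integral>\<^sup>+ u. wasserstein1 (cond_law n K s u {}) (cond_law n K s u J)
          \<partial>measure_pmf (pmf_of_set V) \<partial>measure_pmf (pmf_of_set JS) \<partial>PiM {..<2*n} (\<lambda>_. M))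
      \<le> (\<integral>\<^sup>+ s. 2 * (\<integral>\<^sup>+ u. wasserstein1 (cond_law n K s u {}) (cond_law n K s u {..<n}) \<partial>measure_pmf (pmf_of_set V))
          \<partial>PiM {..<2*n} (\<lambda>_. M))"
    by (rule nn_integral_mono) (rule pw)
  also have "\<dots> \<le> 2 * (\<integral>\<^sup>+ s. \<integral>\<^sup>+ u. wasserstein1 (cond_law n K s u {}) (cond_law n K s u {..<n})
          \<partial>measure_pmf (pmf_of_set V) \<partial>PiM {..<2*n} (\<lambda>_. M))"
    by (rule nn_integral_2mult_le)
  finally show ?thesis unfolding V_def JS_def .
qed

end
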